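(* Let $\mathcal H=\mathbb C^2$ with orthonormal basis $e_1,e_2$. For a selfadjoint unitary $\eta$ on $\mathcal H$ let $\mathcal B(\eta)$ be the unital algebra of operators on the Fermi–Fock space $\mathcal F_-(\mathbb C^2)$ generated by $a_-(e_i)$ and $a_-^\dagger(e_i):=\Gamma(\eta)a_-^*(e_i)\Gamma(\eta)$, $i=1,2$, with involution $x\mapsto x^\dagger:=\Gamma(\eta)x^*\Gamma(\eta)$ ($x^*$ the Hilbert-space adjoint). Then the involutive algebras $(\mathcal B(I),\dagger)$ and $(\mathcal B(-I),\dagger)$ are not involutively isomorphic.
   Context: An involutive algebra is a complex algebra with a conjugate-linear antimultiplicative map $\varphi$ with $\varphi^2=\mathrm{id}$; an involutive isomorphism is an algebra isomorphism $F$ with $F(\varphi(x))=\psi(F(x))$. $\mathcal F_-(\mathbb C^2)$ is the antisymmetric Fock space over $\mathbb C^2$ (dimension 4), $a_-(f),a_-^*(f)$ are the usual Fermi annihilation/creation operators satisfying $a_-(f)a_-^*(g)+a_-^*(g)a_-(f)=\langle f|g\rangle I$, and $\Gamma(\eta)=I\oplus\eta\oplus\eta^{\otimes2}\oplus\cdots$ restricted to $\mathcal F_-$. For $\eta=-I$ the generators satisfy $a_-(f)a_-^\dagger(g)+a_-^\dagger(g)a_-(f)=-\langle f|g\rangle I$. *)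

theory Defs
  imports "Jordan_Normal_Form.Determinant"
begin

(* Operators on the antisymmetric Fock space F_-(C^2) = C^4 are 4x4 complex
   matrices w.r.t. the orthonormal basis
   index 0: vacuum Omega, 1: e1, 2: e2, 3: e1 /\ e2 (normalised). *)

definition hadj :: "complex mat \<Rightarrow> complex mat" where
  "hadj A = mat (dim_col A) (dim_row A) (\<lambda>(i,j). cnj (A $$ (j,i)))"

definition fock_e :: "nat \<Rightarrow> complex vec" where
  "fock_e i = unit_vec 2 i"

(* Fermi creation operator a_-^*(f):
   Omega |-> f1 e1 + f2 e2,  e1 |-> f2 e2/\e1 = -f2 e1/\e2,  e2 |-> f1 e1/\e2 *)
definition fermi_cre :: "complex vec \<Rightarrow> complex mat" where
  "fermi_cre f = mat 4 4 (\<lambda>(i,j).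
     if (i,j) = (1,0) then f $ 0
     else if (i,j) = (2,0) then f $ 1
     else if (i,j) = (3,1) then - (f $ 1)
     else if (i,j) = (3,2) then f $ 0
     else 0)"

definition fermi_ann :: "complex vec \<Rightarrow> complex mat" where
  "fermi_ann f = hadj (fermi_cre f)"

(* second quantisation Gamma(eta) restricted to F_-(C^2):
   1 on the vacuum, eta on one-particle space, Lambda^2 eta = det eta on e1/\e2 *)
definition Gamma :: "complex mat \<Rightarrow> complex mat" where
  "Gamma eta = mat 4 4 (\<lambda>(i,j).
     if i = 0 \<and> j = 0 then 1
     else if i \<in> {1,2} \<and> j \<in> {1,2} then eta $$ (i - 1, j - 1)
     else if i = 3 \<and> j = 3 then det eta
     else 0)"

definition dagger :: "complex mat \<Rightarrow> complex mat \<Rightarrow> complex mat" where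
  "dagger eta x = Gamma eta * hadj x * Gamma eta"

definition fermi_cre_dag :: "complex mat \<Rightarrow> complex vec \<Rightarrow> complex mat" where
  "fermi_cre_dag eta f = Gamma eta * fermi_cre f * Gamma eta"

inductive_set Balg :: "complex mat \<Rightarrow> complex mat set" for eta where
  unit: "1\<^sub>m 4 \<in> Balg eta"
| gen_ann: "i < 2 \<Longrightarrow> fermi_ann (fock_e i) \<in> Balg eta"
| gen_cre: "i < 2 \<Longrightarrow> fermi_cre_dag eta (fock_e i) \<in> Balg eta"
| add: "x \<in> Balg eta \<Longrightarrow> y \<in> Balg eta \<Longrightarrow> x + y \<in> Balg eta"
| mult: "x \<in> Balg eta \<Longrightarrow> y \<in> Balg eta \<Longrightarrow> x * y \<in> Balg eta"
| smult: "x \<in> Balg eta \<Longrightarrow> c \<cdot>\<^sub>m x \<in> Balg eta"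

definition inv_iso ::
  "complex mat set \<Rightarrow> (complex mat \<Rightarrow> complex mat) \<Rightarrow> complex mat set
   \<Rightarrow> (complex mat \<Rightarrow> complex mat) \<Rightarrow> (complex mat \<Rightarrow> complex mat) \<Rightarrow> bool" where
  "inv_iso A phi B psi F \<longleftrightarrow>
     bij_betw F A B \<and>
     (\<forall>x\<in>A. \<forall>y\<in>A. F (x + y) = F x + F y) \<and>
     (\<forall>c. \<forall>x\<in>A. F (c \<cdot>\<^sub>m x) = c \<cdot>\<^sub>m F x) \<and>
     (\<forall>x\<in>A. \<forall>y\<in>A. F (x * y) = F x * F y) \<and>
     (\<forall>x\<in>A. F (phi x) = psi (F x))"

end

theory Submission
  imports Defs
begin

lemma less4: "(i::nat) < 4 \<longleftrightarrow> i = 0 \<or> i = 1 \<or> i = 2 \<or> i = 3" by auto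
lemma sum4: "sum f {0..<4::nat} = f 0 + f 1 + f 2 + f 3"
  by (simp add: eval_nat_numeral)
lemma hadj_carrier[simp]: "A \<in> carrier_mat n m \<Longrightarrow> hadj A \<in> carrier_mat m n"
  by (auto simp: hadj_def)
lemma Gamma_carrier[simp]: "Gamma e \<in> carrier_mat 4 4" by (simp add: Gamma_def)
lemma cre_carrier[simp]: "fermi_cre f \<in> carrier_mat 4 4" by (simp add: fermi_cre_def)
lemma Gamma_one: "Gamma (1\<^sub>m 2) = 1\<^sub>m 4"
  by (rule eq_matI) (auto simp: Gamma_def)

lemma Balg_carrier: "x \<in> Balg eta \<Longrightarrow> x \<in> carrier_mat 4 4"
proof (induction rule: Balg.induct)
  case (gen_ann i)
  then show ?case unfolding fermi_ann_def using hadj_carrier cre_carrier by blast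
next
  case (gen_cre i)
  then show ?case unfolding fermi_cre_dag_def
    by (meson Gamma_carrier cre_carrier mult_carrier_mat)
next
  case (add x y) then show ?case by simp
next
  case (mult x y) then show ?case by (meson mult_carrier_mat)
next
  case (smult x c) then show ?case by simp
qed simp

lemma det_mone: "det (- 1\<^sub>m 2 :: complex mat) = 1"
proof -
  have "(- 1\<^sub>m 2 :: complex mat) = (-1) \<cdot>\<^sub>m 1\<^sub>m 2" by (rule eq_matI) auto
  then show ?thesis by simp
qed
lemma Gamma_mone: "Gamma (- 1\<^sub>m 2) = mat 4 4 (\<lambda>(i,j). if i = j then (if i = 1 \<or> i = 2 then -1 else 1) else 0)"
proof (rule eq_matI)
  fix i j assume "i < dim_row (mat 4 4 (\<lambda>(i,j). if i = j then (if i = 1 \<or> i = 2 then -1 else 1) else 0) :: complex mat)"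
    "j < dim_col (mat 4 4 (\<lambda>(i,j). if i = j then (if i = 1 \<or> i = 2 then -1 else 1) else 0) :: complex mat)"
  then have "i < 4" "j < 4" by auto
  then have "i = 0 \<or> i = 1 \<or> i = 2 \<or> i = 3" "j = 0 \<or> j = 1 \<or> j = 2 \<or> j = 3" by auto
  then show "Gamma (- 1\<^sub>m 2) $$ (i, j) = mat 4 4 (\<lambda>(i,j). if i = j then (if i = 1 \<or> i = 2 then -1 else 1) else 0) $$ (i, j)"
    by (elim disjE) (simp_all add: Gamma_def det_mone)
qed (simp_all add: Gamma_def)

lemma hadj_index[simp]: "i < dim_col A \<Longrightarrow> j < dim_row A \<Longrightarrow> hadj A $$ (i,j) = cnj (A $$ (j,i))"
  by (simp add: hadj_def)
lemma hadj_dims[simp]: "dim_row (hadj A) = dim_col A" "dim_col (hadj A) = dim_row A"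
  by (simp_all add: hadj_def)

lemma hadj_one[simp]: "hadj (1\<^sub>m n) = 1\<^sub>m n"
  by (rule eq_matI) auto
lemma hadj_add: "A \<in> carrier_mat n m \<Longrightarrow> B \<in> carrier_mat n m \<Longrightarrow> hadj (A + B) = hadj A + hadj B"
  by (rule eq_matI) auto
lemma hadj_smult: "hadj (c \<cdot>\<^sub>m A) = cnj c \<cdot>\<^sub>m hadj A"
  by (rule eq_matI) auto
lemma hadj_hadj: "hadj (hadj A) = A"
  by (rule eq_matI) auto
lemma hadj_mult: "A \<in> carrier_mat n k \<Longrightarrow> B \<in> carrier_mat k m \<Longrightarrow> hadj (A * B) = hadj B * hadj A"
  by (rule eq_matI) (auto simp: scalar_prod_def intro!: sum.cong)

lemma cnj_sq: "cnj z * z = complex_of_real ((cmod z)^2)"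
  by (subst complex_norm_square) (rule mult.commute)

lemma hadj_pos:
  assumes y: "y \<in> carrier_mat n m" and z: "hadj y * y = 0\<^sub>m m m"
  shows "y = 0\<^sub>m n m"
proof (rule eq_matI)
  fix i j assume i: "i < dim_row (0\<^sub>m n m :: complex mat)" and j: "j < dim_col (0\<^sub>m n m :: complex mat)"
  have "(hadj y * y) $$ (j,j) = (\<Sum>l<n. cnj (y $$ (l,j)) * y $$ (l,j))"
    using y j by (auto simp: scalar_prod_def atLeast0LessThan intro!: sum.cong)
  also have "\<dots> = (\<Sum>l<n. complex_of_real ((cmod (y $$ (l,j)))^2))" by (simp only: cnj_sq)
  also have "\<dots> = complex_of_real (\<Sum>l<n. (cmod (y $$ (l,j)))^2)" by (simp only: of_real_sum)
  finally have "complex_of_real (\<Sum>l<n. (cmod (y $$ (l,j)))^2) = 0" using z j y by auto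
  then have "(\<Sum>l<n. (cmod (y $$ (l,j)))^2) = 0" by (simp only: of_real_eq_0_iff)
  then have "\<forall>l\<in>{..<n}. (cmod (y $$ (l,j)))^2 = 0"
    by (subst sum_nonneg_eq_0_iff[symmetric]) auto
  then show "y $$ (i,j) = 0\<^sub>m n m $$ (i,j)" using i j by auto
qed (use y in auto)



lemma cre0: "fermi_cre (fock_e 0) = mat 4 4 (\<lambda>(i,j). if (i,j) = (1,0) \<or> (i,j) = (3,2) then 1 else 0)"
  by (rule eq_matI) (auto simp: fermi_cre_def fock_e_def)

lemma ann0: "fermi_ann (fock_e 0) = mat 4 4 (\<lambda>(i,j). if (i,j) = (0,1) \<or> (i,j) = (2,3) then 1 else 0)"
  unfolding fermi_ann_def cre0 by (rule eq_matI) auto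

lemma mat4_eqI:
  assumes "A \<in> carrier_mat 4 4" "B \<in> carrier_mat 4 4"
    "\<And>i j. i \<in> {0,1,2,3} \<Longrightarrow> j \<in> {0,1,2,3} \<Longrightarrow> A $$ (i,j) = B $$ (i,j)"
  shows "A = B"
proof (rule eq_matI)
  fix i j assume "i < dim_row B" "j < dim_col B"
  then have "i < 4" "j < 4" using assms by auto
  then have "i \<in> {0,1,2,3}" "j \<in> {0,1,2,3}" by auto
  then show "A $$ (i,j) = B $$ (i,j)" by (rule assms(3))
qed (use assms in auto)

definition xm :: "complex mat" where
  "xm = mat 4 4 (\<lambda>(i,j). if (i,j) \<in> {(0,0),(1,0),(2,2),(3,2)} then -1 else 0)"

lemma fcd0: "fermi_cre_dag (- 1\<^sub>m 2) (fock_e 0) = mat 4 4 (\<lambda>(i,j). if (i,j) = (1,0) \<or> (i,j) = (3,2) then -1 else 0)"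
  unfolding fermi_cre_dag_def cre0 Gamma_mone
  by (rule mat4_eqI) (auto simp: scalar_prod_def sum4)

lemma x_eq: "(1\<^sub>m 4 + (-1) \<cdot>\<^sub>m fermi_cre_dag (- 1\<^sub>m 2) (fock_e 0)) *
    (fermi_ann (fock_e 0) * fermi_cre_dag (- 1\<^sub>m 2) (fock_e 0)) = xm"
  unfolding fcd0 ann0 xm_def
  by (rule mat4_eqI) (auto simp: scalar_prod_def sum4)

lemma x_in: "xm \<in> Balg (- 1\<^sub>m 2)"
  unfolding x_eq[symmetric]
  by (intro Balg.intros) auto

lemma x_null: "dagger (- 1\<^sub>m 2) xm * xm = 0\<^sub>m 4 4"
  unfolding dagger_def Gamma_mone xm_def
  by (rule mat4_eqI) (auto simp: scalar_prod_def sum4)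

lemma x_nz: "xm \<noteq> 0\<^sub>m 4 4"
proof
  assume a: "xm = 0\<^sub>m 4 4"
  have "xm $$ (0,0) = -1" by (simp add: xm_def)
  moreover have "(0\<^sub>m 4 4 :: complex mat) $$ (0,0) = 0" by simp
  ultimately show False using a by simp
qed



lemma mult_one_4: assumes a: "(A :: complex mat) \<in> carrier_mat 4 4" shows "1\<^sub>m 4 * A * 1\<^sub>m 4 = A"
  using left_mult_one_mat[OF a] right_mult_one_mat[OF a] by simp

lemma Balg_hadj: "y \<in> Balg (1\<^sub>m 2) \<Longrightarrow> hadj y \<in> Balg (1\<^sub>m 2)"
proof (induction rule: Balg.induct)
  case unit
  then show ?case by (simp add: Balg.unit)
next
  case (gen_ann i)
  have "hadj (fermi_ann (fock_e i)) = fermi_cre_dag (1\<^sub>m 2) (fock_e i)"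
    by (simp add: fermi_ann_def hadj_hadj fermi_cre_dag_def Gamma_one mult_one_4)
  then show ?case using gen_ann Balg.gen_cre by metis
next
  case (gen_cre i)
  have "hadj (fermi_cre_dag (1\<^sub>m 2) (fock_e i)) = fermi_ann (fock_e i)"
    by (simp add: fermi_ann_def fermi_cre_dag_def Gamma_one mult_one_4)
  then show ?case using gen_cre Balg.gen_ann by metis
next
  case (add x y)
  then show ?case using Balg_carrier hadj_add Balg.add by metis
next
  case (mult x y)
  then show ?case using Balg_carrier hadj_mult Balg.mult by metis
next
  case (smult x c)
  then show ?case using hadj_smult Balg.smult by metis
qed

theorem mainTheorem6:
  shows "\<not> (\<exists>F. inv_iso (Balg (1\<^sub>m 2)) (dagger (1\<^sub>m 2))
                       (Balg (- (1\<^sub>m 2))) (dagger (- (1\<^sub>m 2))) F)"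
proof
  assume "\<exists>F. inv_iso (Balg (1\<^sub>m 2)) (dagger (1\<^sub>m 2)) (Balg (- (1\<^sub>m 2))) (dagger (- (1\<^sub>m 2))) F"
  then obtain F where bij: "bij_betw F (Balg (1\<^sub>m 2)) (Balg (- (1\<^sub>m 2)))"
    and sm: "\<forall>c. \<forall>x\<in>Balg (1\<^sub>m 2). F (c \<cdot>\<^sub>m x) = c \<cdot>\<^sub>m F x"
    and mu: "\<forall>x\<in>Balg (1\<^sub>m 2). \<forall>y\<in>Balg (1\<^sub>m 2). F (x * y) = F x * F y"
    and dg: "\<forall>x\<in>Balg (1\<^sub>m 2). F (dagger (1\<^sub>m 2) x) = dagger (- (1\<^sub>m 2)) (F x)"
    unfolding inv_iso_def by blast
  obtain y where y: "y \<in> Balg (1\<^sub>m 2)" and Fy: "F y = xm"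
    using bij x_in unfolding bij_betw_def by (metis imageE)
  have yc: "y \<in> carrier_mat 4 4" using y Balg_carrier by blast
  have dy: "dagger (1\<^sub>m 2) y = hadj y"
    unfolding dagger_def Gamma_one using yc hadj_carrier mult_one_4 by blast
  have hy: "hadj y \<in> Balg (1\<^sub>m 2)" using y Balg_hadj by blast
  have "F (hadj y * y) = 0\<^sub>m 4 4"
    using mu hy y dg dy Fy x_null by metis
  have u: "1\<^sub>m 4 \<in> Balg (1\<^sub>m 2)" by (rule Balg.unit)
  have z0: "(0::complex) \<cdot>\<^sub>m 1\<^sub>m 4 = 0\<^sub>m 4 4" by (rule eq_matI) auto
  have zA: "0\<^sub>m 4 4 \<in> Balg (1\<^sub>m 2)" using Balg.smult[OF u, of 0] z0 by simp
  have F1: "F (1\<^sub>m 4) \<in> carrier_mat 4 4"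
    using bij u Balg_carrier unfolding bij_betw_def by blast
  have "F (0\<^sub>m 4 4) = 0 \<cdot>\<^sub>m F (1\<^sub>m 4)" using sm u z0 by metis
  also have "\<dots> = 0\<^sub>m 4 4" using F1 by (intro eq_matI) auto
  finally have F0: "F (0\<^sub>m 4 4) = 0\<^sub>m 4 4" .
  have hyy: "hadj y * y \<in> Balg (1\<^sub>m 2)" using hy y by (rule Balg.mult)
  have "hadj y * y = 0\<^sub>m 4 4"
    using bij hyy zA F0 \<open>F (hadj y * y) = 0\<^sub>m 4 4\<close> unfolding bij_betw_def inj_on_def by metis
  then have "y = 0\<^sub>m 4 4" using hadj_pos yc by blast
  then have "xm = 0\<^sub>m 4 4" using Fy F0 by simp
  then show False using x_nz by simp
qed

end
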